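(* The class of data languages accepted by SAFA is not closed under complementation: there exists a data language $L\subseteq(\Sigma\times D)^*$ accepted by some SAFA such that no SAFA accepts $(\Sigma\times D)^*\setminus L$.
   Context: $D$ is a fixed countably infinite set of data values; for a finite alphabet $\Sigma$, data words are elements of $(\Sigma\times D)^*$. A set augmented finite automaton (SAFA) is a tuple $M=(Q,\Sigma\times D,q_0,F,H,\delta)$: $Q$ finite set of states, $q_0\in Q$ initial, $F\subseteq Q$ final, $H=\{h_1,\dots,h_m\}$ a finite collection of (names of) sets of data values, $\delta\subseteq Q\times\Sigma\times C\times OP\times Q$ with $C=\{p(h_i),\,!p(h_i): h_i\in H\}$, $OP=\{-\}\cup\{\mathsf{ins}(h_i):h_i\in H\}$. Configurations are $(q,\langle S_1,\dots,S_m\rangle)$ with $S_i\subseteq D$ finite; initially state $q_0$ and all sets empty. On reading $(a,d)$, a transition $(q,a,\alpha,op,q')$ from the current state may be taken if $\alpha=p(h_i)$ and $d\in S_i$, or $\alpha=\,!p(h_i)$ and $d\notin S_i$; then the state becomes $q'$ and if $op=\mathsf{ins}(h_j)$ the value $d$ is added to $S_j$ ($op=-$ changes nothing). A word is accepted if some run reads it entirely and ends in $F$; $L(M)$ is the set of accepted words. *)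

theory Defs
  imports Main "HOL-Library.Countable_Set"
begin

(* Conditions p(h_i) / !p(h_i) and operations - / ins(h_i); set names are naturals *)
datatype cond = P nat | NP nat
datatype op = Nop | Ins nat

record 'a safa =
  states :: "nat set"
  init   :: nat
  final  :: "nat set"
  names  :: "nat set"
  delta  :: "(nat \<times> 'a \<times> cond \<times> op \<times> nat) set"

definition wf_safa :: "'a set \<Rightarrow> 'a safa \<Rightarrow> bool" where
  "wf_safa Sig M \<longleftrightarrow> finite (states M) \<and> init M \<in> states M \<and> final M \<subseteq> states M
     \<and> finite (names M)
     \<and> (\<forall>(q,a,c,oper,q') \<in> delta M. q \<in> states M \<and> a \<in> Sig \<and> q' \<in> states M
          \<and> (case c of P h \<Rightarrow> h \<in> names M | NP h \<Rightarrow> h \<in> names M)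
          \<and> (case oper of Nop \<Rightarrow> True | Ins h \<Rightarrow> h \<in> names M))"

type_synonym 'd config = "nat \<times> (nat \<Rightarrow> 'd set)"

definition cond_holds :: "cond \<Rightarrow> (nat \<Rightarrow> 'd set) \<Rightarrow> 'd \<Rightarrow> bool" where
  "cond_holds c S d = (case c of P h \<Rightarrow> d \<in> S h | NP h \<Rightarrow> d \<notin> S h)"

definition apply_op :: "op \<Rightarrow> (nat \<Rightarrow> 'd set) \<Rightarrow> 'd \<Rightarrow> (nat \<Rightarrow> 'd set)" where
  "apply_op oper S d = (case oper of Nop \<Rightarrow> S | Ins h \<Rightarrow> S(h := insert d (S h)))"

definition step :: "'a safa \<Rightarrow> 'd config \<Rightarrow> 'a \<times> 'd \<Rightarrow> 'd config \<Rightarrow> bool" where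
  "step M cf x cf' \<longleftrightarrow> (\<exists>c oper. (fst cf, fst x, c, oper, fst cf') \<in> delta M
      \<and> cond_holds c (snd cf) (snd x) \<and> snd cf' = apply_op oper (snd cf) (snd x))"

fun run :: "'a safa \<Rightarrow> 'd config \<Rightarrow> ('a \<times> 'd) list \<Rightarrow> 'd config \<Rightarrow> bool" where
  "run M cf [] cf' \<longleftrightarrow> cf' = cf"
| "run M cf (x # w) cf' \<longleftrightarrow> (\<exists>cf''. step M cf x cf'' \<and> run M cf'' w cf')"

definition lang :: "'a safa \<Rightarrow> ('a \<times> 'd) list set" where
  "lang M = {w. \<exists>cf. run M (init M, \<lambda>_. {}) w cf \<and> fst cf \<in> final M}"

definition data_words :: "'a set \<Rightarrow> ('a \<times> 'd) list set" where
  "data_words Sig = {w. \<forall>x \<in> set w. fst x \<in> Sig}"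

end

theory Submission
  imports Defs
begin

fun pw :: "'x list \<Rightarrow> 'x list" where
  "pw [] = []"
| "pw (x # xs) = x # x # pw xs"

lemma length_pw[simp]: "length (pw xs) = 2 * length xs"
  by (induction xs) auto

lemma set_pw[simp]: "set (pw xs) = set xs"
  by (induction xs) auto

lemma nth_pw: "j < 2 * length xs \<Longrightarrow> pw xs ! j = xs ! (j div 2)"
proof (induction xs arbitrary: j)
  case Nil then show ?case by simp
next
  case (Cons x xs)
  show ?case
  proof (cases j)
    case 0 then show ?thesis by simp
  next
    case (Suc j')
    then show ?thesis
    proof (cases j')
      case 0 then show ?thesis using Suc by simp
    next
      case (Suc j'')
      then have "j = Suc (Suc j'')" using \<open>j = Suc j'\<close> by simp
      then show ?thesis using Cons by auto
    qed
  qed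
qed

lemma upd_pw: "i < length xs \<Longrightarrow>
   (pw xs)[Suc (2*i) := z] = pw (take i xs) @ [xs!i, z] @ pw (drop (Suc i) xs)"
proof (induction xs arbitrary: i)
  case Nil then show ?case by simp
next
  case (Cons x xs)
  show ?case
  proof (cases i)
    case 0 then show ?thesis by simp
  next
    case (Suc i')
    then have e: "Suc (2*i) = Suc (Suc (Suc (2*i')))" by simp
    have "i' < length xs" using Cons.prems Suc by simp
    then show ?thesis unfolding e using Cons.IH Suc by simp
  qed
qed

lemma drop_pw: "drop (2*i) (pw xs) = pw (drop i xs)"
proof (induction xs arbitrary: i)
  case Nil then show ?case by simp
next
  case (Cons x xs)
  then show ?case by (cases i) auto
qed

lemma run_append: "run M cf (u @ v) cf' \<longleftrightarrow> (\<exists>cf''. run M cf u cf'' \<and> run M cf'' v cf')"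
  by (induction u arbitrary: cf) auto

lemma run_seq: "run M cf w cf' \<Longrightarrow>
   \<exists>f. f 0 = cf \<and> f (length w) = cf' \<and> (\<forall>j<length w. step M (f j) (w!j) (f (Suc j)))"
proof (induction w arbitrary: cf)
  case Nil then show ?case by (intro exI[of _ "\<lambda>_. cf"]) simp
next
  case (Cons x w)
  then obtain cf'' where s: "step M cf x cf''" and r: "run M cf'' w cf'" by auto
  from Cons.IH[OF r] obtain g where g: "g 0 = cf''" "g (length w) = cf'"
    "\<forall>j<length w. step M (g j) (w!j) (g (Suc j))" by blast
  show ?case
    apply (rule exI[of _ "\<lambda>j. if j = 0 then cf else g (j - 1)"])
    using s g by (auto simp: nth_Cons split: nat.splits)
qed

lemma seq_run: "(\<forall>j<length w. step M (f j) (w!j) (f (Suc j))) \<Longrightarrow> run M (f 0) w (f (length w))"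
proof (induction w arbitrary: f)
  case Nil then show ?case by simp
next
  case (Cons x w)
  have "run M ((\<lambda>t. f (Suc t)) 0) w ((\<lambda>t. f (Suc t)) (length w))"
    apply (rule Cons.IH) using Cons.prems by auto
  moreover have "step M (f 0) x (f 1)" using Cons.prems by fastforce
  ultimately show ?case by (metis One_nat_def length_Cons run.simps(2))
qed

lemma step_mono: assumes "step M cf x cf'" shows "snd cf h \<subseteq> snd cf' h"
proof -
  from assms obtain c oper where "snd cf' = apply_op oper (snd cf) (snd x)" unfolding step_def by blast
  then show ?thesis by (cases oper) (auto simp: apply_op_def)
qed

lemma step_sub: assumes "step M cf x cf'" shows "snd cf' h \<subseteq> snd cf h \<union> {snd x}"
proof -
  from assms obtain c oper where "snd cf' = apply_op oper (snd cf) (snd x)" unfolding step_def by blast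
  then show ?thesis by (cases oper) (auto simp: apply_op_def)
qed

lemma seq_mono:
  assumes "\<forall>j<length w. step M (f j) (w!j) (f (Suc j))" "i \<le> j" "j \<le> length w"
  shows "snd (f i) h \<subseteq> snd (f j) h"
  using assms(2,3)
proof (induction j)
  case 0 then show ?case by simp
next
  case (Suc j)
  show ?case
  proof (cases "i = Suc j")
    case True then show ?thesis by simp
  next
    case False
    then have "snd (f i) h \<subseteq> snd (f j) h" using Suc by simp
    also have "\<dots> \<subseteq> snd (f (Suc j)) h" using step_mono[of M "f j" "w!j" "f (Suc j)" h] assms(1) Suc.prems by auto
    finally show ?thesis .
  qed
qed

lemma seq_sub:
  assumes "\<forall>j<length w. step M (f j) (w!j) (f (Suc j))" "snd (f 0) = (\<lambda>_. {})" "j \<le> length w"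
  shows "snd (f j) h \<subseteq> snd ` set w"
  using assms(3)
proof (induction j)
  case 0 then show ?case using assms(2) by simp
next
  case (Suc j)
  have "snd (f (Suc j)) h \<subseteq> snd (f j) h \<union> {snd (w!j)}"
    using step_sub[of M "f j" "w!j" "f (Suc j)" h] assms(1) Suc.prems by auto
  moreover have "snd (w!j) \<in> snd ` set w" using Suc.prems by auto
  ultimately show ?case using Suc by auto
qed

lemma run_subst:
  assumes "\<forall>x\<in>set v. snd x \<notin> X" "\<forall>h. S h - X = S' h - X" "run M (q,S) v cf"
  shows "\<exists>cf'. run M (q,S') v cf' \<and> fst cf' = fst cf"
  using assms
proof (induction v arbitrary: q S S')
  case Nil then show ?case by simp
next
  case (Cons x v)
  then obtain cf'' where s: "step M (q,S) x cf''" and r: "run M cf'' v cf" by auto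
  from s obtain c oper where t: "(q, fst x, c, oper, fst cf'') \<in> delta M"
    and ch: "cond_holds c S (snd x)" and ap: "snd cf'' = apply_op oper S (snd x)"
    unfolding step_def by auto
  have nx: "snd x \<notin> X" using Cons.prems by auto
  have ch': "cond_holds c S' (snd x)"
    using ch nx Cons.prems(2) unfolding cond_holds_def
    by (auto split: cond.splits)
  define T' where "T' = apply_op oper S' (snd x)"
  have s': "step M (q,S') x (fst cf'', T')"
    unfolding step_def T'_def using t ch' by auto
  have agree: "\<forall>h. snd cf'' h - X = T' h - X"
    using Cons.prems(2) ap unfolding T'_def apply_op_def by (auto split: op.splits)
  have r': "run M (fst cf'', snd cf'') v cf" using r by simp
  from Cons.IH[OF _ agree r'] Cons.prems(1) obtain cf' where
    "run M (fst cf'', T') v cf'" "fst cf' = fst cf" by auto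
  moreover have "run M (q,S') (x#v) cf'" using s' calculation(1) run.simps(2) by blast
  ultimately show ?case by blast
qed


definition M0 :: "'a set \<Rightarrow> 'a safa" where
  "M0 Sig = \<lparr>states = {0,1,2,3}, init = 0, final = {3}, names = {0},
     delta = {(q,a,c,oper,q'). a \<in> Sig \<and> (c = P 0 \<or> c = NP 0) \<and>
        ((q = 0 \<and> q' = 1 \<and> oper = Nop) \<or> (q = 1 \<and> q' = 0 \<and> oper = Nop)
       \<or> (q = 0 \<and> q' = 2 \<and> oper = Ins 0) \<or> (q = 2 \<and> q' = 3 \<and> oper = Nop \<and> c = NP 0)
       \<or> (q = 3 \<and> q' = 3 \<and> oper = Nop))}\<rparr>"

lemma M0_wf: "wf_safa Sig (M0 Sig)"
  unfolding wf_safa_def M0_def by auto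

lemma M0_pairs: "run (M0 Sig) (0,S) (pw xs) cf \<Longrightarrow> fst cf = 0"
proof (induction xs arbitrary: S)
  case Nil then show ?case by simp
next
  case (Cons x xs)
  then obtain cf1 cf2 where s1: "step (M0 Sig) (0,S) x cf1" and s2: "step (M0 Sig) cf1 x cf2"
    and r: "run (M0 Sig) cf2 (pw xs) cf" by auto
  have "fst cf2 = 0"
    using s1 s2 unfolding step_def M0_def cond_holds_def apply_op_def by auto
  then have "run (M0 Sig) (0, snd cf2) (pw xs) cf" using r by (metis prod.collapse)
  then show ?case using Cons.IH by blast
qed

lemma M0_step_nop:
  assumes "fst x \<in> Sig" "(q = 0 \<and> q' = 1) \<or> (q = 1 \<and> q' = 0) \<or> (q = 3 \<and> q' = 3)"
  shows "step (M0 Sig) (q,S) x (q',S)"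
  unfolding step_def
  apply (rule exI[of _ "if snd x \<in> S 0 then P 0 else NP 0"])
  apply (rule exI[of _ Nop])
  using assms by (auto simp: M0_def cond_holds_def apply_op_def)

lemma M0_loop0: "\<forall>x\<in>set xs. fst x \<in> Sig \<Longrightarrow> run (M0 Sig) (0,S) (pw xs) (0,S)"
proof (induction xs)
  case Nil then show ?case by simp
next
  case (Cons x xs)
  then have "step (M0 Sig) (0,S) x (1,S)" "step (M0 Sig) (1,S) x (0,S)"
    by (auto intro!: M0_step_nop)
  then show ?case using Cons by auto
qed

lemma M0_loop3: "\<forall>x\<in>set xs. fst x \<in> Sig \<Longrightarrow> run (M0 Sig) (3,S) xs (3,S)"
proof (induction xs)
  case Nil then show ?case by simp
next
  case (Cons x xs)
  then have "step (M0 Sig) (3,S) x (3,S)"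
    by (auto intro!: M0_step_nop)
  then show ?case using Cons by auto
qed

lemma M0_acc:
  fixes xs :: "('a \<times> 'd) list"
  assumes "\<forall>x\<in>set xs. fst x \<in> Sig" "i < length xs" "b \<in> Sig" "y \<noteq> snd (xs!i)"
  shows "(pw xs)[Suc (2*i) := (b,y)] \<in> lang (M0 Sig)"
proof -
  define S0 :: "nat \<Rightarrow> 'd set" where "S0 = (\<lambda>_. {})"
  define S1 where "S1 = S0(0 := {snd (xs!i)})"
  have r1: "run (M0 Sig) (0,S0) (pw (take i xs)) (0,S0)"
    using assms(1) by (intro M0_loop0) (meson in_set_takeD)
  have xi: "fst (xs!i) \<in> Sig" using assms(1,2) by auto
  have s1: "step (M0 Sig) (0,S0) (xs!i) (2,S1)"
    unfolding step_def
    apply (rule exI[of _ "NP 0"])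
    apply (rule exI[of _ "Ins 0"])
    using xi by (auto simp: M0_def cond_holds_def apply_op_def S1_def S0_def)
  have s2: "step (M0 Sig) (2,S1) (b,y) (3,S1)"
    unfolding step_def
    apply (rule exI[of _ "NP 0"])
    apply (rule exI[of _ Nop])
    using assms(3,4) by (auto simp: M0_def cond_holds_def apply_op_def S1_def S0_def)
  have r3: "run (M0 Sig) (3,S1) (pw (drop (Suc i) xs)) (3,S1)"
    using assms(1) by (intro M0_loop3) (auto dest: in_set_dropD)
  have "run (M0 Sig) (0,S0) (pw (take i xs) @ [xs!i, (b,y)] @ pw (drop (Suc i) xs)) (3,S1)"
    unfolding run_append using r1 s1 s2 r3 by (simp only: run.simps) blast
  then show ?thesis unfolding upd_pw[OF assms(2)] lang_def S0_def by (auto simp: M0_def)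
qed

lemma distinct_drop_notin:
  assumes "distinct ds" "j \<le> i" "j < length ds"
  shows "ds!j \<notin> set (drop (Suc i) ds)"
proof
  assume "ds!j \<in> set (drop (Suc i) ds)"
  then obtain t where "t < length (drop (Suc i) ds)" "drop (Suc i) ds ! t = ds ! j"
    by (meson in_set_conv_nth)
  then have "ds ! (Suc i + t) = ds ! j" "Suc i + t < length ds" by auto
  then show False using assms nth_eq_iff_index_eq by fastforce
qed


theorem lemma8:
  fixes Sig :: "'a set"
  assumes "finite Sig" and "Sig \<noteq> {}"
    and "countable (UNIV :: 'd set)" and "infinite (UNIV :: 'd set)"
  shows "\<exists>M :: 'a safa. wf_safa Sig M \<and>
           \<not> (\<exists>M' :: 'a safa. wf_safa Sig M' \<and>
                (lang M' :: ('a \<times> 'd) list set) = data_words Sig - lang M)"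
proof (intro exI[of _ "M0 Sig"] conjI notI M0_wf)
  assume "\<exists>M' :: 'a safa. wf_safa Sig M' \<and>
                (lang M' :: ('a \<times> 'd) list set) = data_words Sig - lang (M0 Sig)"
  then obtain M' :: "'a safa" where wf: "wf_safa Sig M'"
    and L: "(lang M' :: ('a \<times> 'd) list set) = data_words Sig - lang (M0 Sig)" by blast
  obtain a where a: "a \<in> Sig" using assms(2) by blast
  define k where "k = Suc (card (names M'))"
  obtain B :: "'d set" where B: "finite B" "card B = k"
    using infinite_arbitrarily_large[OF assms(4)] by blast
  obtain ds where ds: "set ds = B" "distinct ds" using finite_distinct_list[OF B(1)] by blast
  have lds: "length ds = k" using ds B distinct_card by fastforce
  obtain e :: 'd where e: "e \<notin> set ds" using ex_new_if_finite[OF assms(4)] by blast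
  define xs where "xs = map (Pair a) ds"
  define w where "w = pw xs"
  have lw: "length w = 2 * k" unfolding w_def xs_def using lds by simp
  have wnth: "\<And>i. i < k \<Longrightarrow> w ! Suc (2*i) = (a, ds!i)"
    unfolding w_def xs_def using lds by (subst nth_pw) auto
  have xsSig: "\<forall>x\<in>set xs. fst x \<in> Sig" unfolding xs_def using a by auto
  have "w \<in> data_words Sig" unfolding data_words_def w_def using xsSig by simp
  moreover have "w \<notin> lang (M0 Sig)"
    unfolding lang_def w_def by (auto simp: M0_def dest!: M0_pairs[unfolded M0_def, simplified])
  ultimately have "w \<in> lang M'" using L by blast
  then obtain cf where r: "run M' (init M', \<lambda>_. {}) w cf" and fin: "fst cf \<in> final M'"
    unfolding lang_def by blast
  obtain f where f0: "f 0 = (init M', \<lambda>_. {})" and fn: "f (length w) = cf"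
    and fs: "\<forall>j<length w. step M' (f j) (w!j) (f (Suc j))"
    using run_seq[OF r] by blast
  have G: "w[p := (fst (w!p), y)] \<in> lang M'"
    if p: "p < length w"
      and t: "(fst (f p), fst (w!p), c, oper, fst (f (Suc p))) \<in> delta M'"
      and ch: "cond_holds c (snd (f p)) y"
      and ap: "snd (f (Suc p)) = apply_op oper (snd (f p)) (snd (w!p))"
      and dr: "\<forall>x\<in>set (drop (Suc p) w). snd x \<notin> {snd (w!p), y}"
    for p y c oper
  proof -
    have r1: "run M' (f 0) (take p w) (f (length (take p w)))"
      by (rule seq_run) (use fs p in auto)
    have r2: "run M' ((\<lambda>t. f (Suc p + t)) 0) (drop (Suc p) w)
               ((\<lambda>t. f (Suc p + t)) (length (drop (Suc p) w)))"
      by (rule seq_run) (use fs p in auto)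
    have e2: "Suc p + length (drop (Suc p) w) = length w" using p by simp
    define T' where "T' = apply_op oper (snd (f p)) y"
    have s: "step M' (f p) (fst (w!p), y) (fst (f (Suc p)), T')"
      unfolding step_def T'_def using t ch by auto
    have agree: "\<forall>h. snd (f (Suc p)) h - {snd (w!p), y} = T' h - {snd (w!p), y}"
      unfolding ap T'_def apply_op_def by (auto split: op.splits)
    have r2': "run M' (fst (f (Suc p)), snd (f (Suc p))) (drop (Suc p) w) cf"
      using r2 unfolding e2 fn by simp
    obtain cf' where r3: "run M' (fst (f (Suc p)), T') (drop (Suc p) w) cf'" and
      fc: "fst cf' = fst cf"
      using run_subst[OF dr agree r2'] by blast
    have "run M' (f 0) (take p w @ (fst (w!p), y) # drop (Suc p) w) cf'"
      unfolding run_append using r1 s r3 p by (simp only: run.simps length_take min_def) (metis prod.collapse less_imp_le_nat not_le)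
    then show ?thesis unfolding upd_conv_take_nth_drop[OF p] lang_def using f0 fc fin by (intro CollectI exI[of _ cf']) simp
  qed
  have Ex: "\<forall>i<k. \<exists>c oper. (fst (f (Suc (2*i))), a, c, oper, fst (f (Suc (Suc (2*i))))) \<in> delta M'
     \<and> cond_holds c (snd (f (Suc (2*i)))) (ds!i)
     \<and> snd (f (Suc (Suc (2*i)))) = apply_op oper (snd (f (Suc (2*i)))) (ds!i)"
  proof (intro allI impI)
    fix i assume i: "i < k"
    then have "step M' (f (Suc (2*i))) (w ! Suc (2*i)) (f (Suc (Suc (2*i))))" using fs lw by auto
    then show "\<exists>c oper. (fst (f (Suc (2*i))), a, c, oper, fst (f (Suc (Suc (2*i))))) \<in> delta M'
     \<and> cond_holds c (snd (f (Suc (2*i)))) (ds!i)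
     \<and> snd (f (Suc (Suc (2*i)))) = apply_op oper (snd (f (Suc (2*i)))) (ds!i)"
      unfolding step_def wnth[OF i] by simp
  qed
  then obtain C Op where CO: "\<forall>i<k. (fst (f (Suc (2*i))), a, C i, Op i, fst (f (Suc (Suc (2*i))))) \<in> delta M'
     \<and> cond_holds (C i) (snd (f (Suc (2*i)))) (ds!i)
     \<and> snd (f (Suc (Suc (2*i)))) = apply_op (Op i) (snd (f (Suc (2*i)))) (ds!i)"
    by metis
  have drw: "\<And>i x. i < k \<Longrightarrow> x \<in> set (drop (Suc (Suc (2*i))) w) \<Longrightarrow> snd x \<in> set (drop (Suc i) ds)"
  proof -
    fix i x assume "i < k" "x \<in> set (drop (Suc (Suc (2*i))) w)"
    moreover have "Suc (Suc (2*i)) = 2 * Suc i" by simp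
    ultimately have "x \<in> set (drop (Suc i) xs)" unfolding w_def using drop_pw by (metis set_pw)
    then show "snd x \<in> set (drop (Suc i) ds)" unfolding xs_def drop_map by auto
  qed
  have memM0: "w[Suc (2*i) := (a, y)] \<in> lang (M0 Sig)" if "i < k" "y \<noteq> ds!i" for i y
    unfolding w_def using M0_acc[OF xsSig, of i a y] that a lds unfolding xs_def by auto
  show False
  proof (cases "\<exists>i<k. \<exists>h. C i = NP h")
    case True
    then obtain i h where i: "i < k" and Ci: "C i = NP h" by blast
    have sub: "snd (f (Suc (2*i))) h \<subseteq> snd ` set w"
      by (rule seq_sub[OF fs]) (use f0 i lw in auto)
    have "snd ` set w = set ds" unfolding w_def xs_def by force
    then have ch: "cond_holds (C i) (snd (f (Suc (2*i)))) e"
      using sub e Ci unfolding cond_holds_def by auto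
    have "w[Suc (2*i) := (fst (w ! Suc (2*i)), e)] \<in> lang M'"
      apply (rule G[where c = "C i" and oper = "Op i"])
      using i lw CO ch wnth[OF i] drw[OF i] distinct_drop_notin[OF ds(2), of i i] lds e
      by (auto dest: in_set_dropD)
    moreover have "w[Suc (2*i) := (a, e)] \<in> lang (M0 Sig)"
      using memM0[OF i] e i lds by (metis nth_mem)
    ultimately show False using L wnth[OF i] by auto
  next
    case False
    define H where "H i = (case C i of P h \<Rightarrow> h | NP h \<Rightarrow> h)" for i
    have CP: "C i = P (H i)" if "i < k" for i
      using False that unfolding H_def by (cases "C i") auto
    have Hn: "H i \<in> names M'" if "i < k" for i
      using wf CO that unfolding wf_safa_def H_def by (cases "C i") fastforce+
    have "\<not> inj_on H {..<k}"
    proof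
      assume "inj_on H {..<k}"
      then have "card {..<k} \<le> card (names M')"
        by (rule card_inj_on_le) (use Hn wf in \<open>auto simp: wf_safa_def\<close>)
      then show False unfolding k_def by simp
    qed
    then obtain i i' where ii: "i < k" "i' < k" "i < i'" "H i = H i'"
      unfolding inj_on_def by (metis lessThan_iff nat_neq_iff)
    have "ds!i \<in> snd (f (Suc (2*i))) (H i)"
      using CO ii CP unfolding cond_holds_def by fastforce
    also have "\<dots> \<subseteq> snd (f (Suc (2*i'))) (H i)"
      by (rule seq_mono[OF fs]) (use ii lw in auto)
    finally have ch: "cond_holds (C i') (snd (f (Suc (2*i')))) (ds!i)"
      using CP[OF ii(2)] ii(4) unfolding cond_holds_def by simp
    have ne: "ds!i \<noteq> ds!i'" using ds(2) ii lds nth_eq_iff_index_eq by fastforce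
    have "w[Suc (2*i') := (fst (w ! Suc (2*i')), ds!i)] \<in> lang M'"
      apply (rule G[where c = "C i'" and oper = "Op i'"])
      using ii lw CO ch wnth[OF ii(2)] drw[OF ii(2)] distinct_drop_notin[OF ds(2), of i' i']
        distinct_drop_notin[OF ds(2), of i i'] lds
      by auto
    moreover have "w[Suc (2*i') := (a, ds!i)] \<in> lang (M0 Sig)"
      using memM0[OF ii(2) ne] .
    ultimately show False using L wnth[OF ii(2)] by auto
  qed
qed

end
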